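(* Let $n\ge2$ and let $f(u)=\sum_{l=0}^\infty a_l(u-u_0)^l$ be a power series in the polar $n$-complex variable $u$ with polar $n$-complex coefficients, converging absolutely on an open set of $\mathbb{R}^n$ (identifying $u$ with $(x_0,\dots,x_{n-1})$) that contains a closed piecewise smooth loop $\Gamma$ together with a surface spanning $\Gamma$. Then $\oint_\Gamma f(u)\,du=0$.
   Context: Polar $n$-complex numbers: $u=x_0+h_1x_1+\cdots+h_{n-1}x_{n-1}$, $x_j\in\mathbb{R}$, $h_0=1$, componentwise addition, bilinear multiplication $h_jh_k=h_{(j+k)\bmod n}$. For $f(u)=\sum_kh_kP_k(x_0,\dots,x_{n-1})$ and $du=\sum_kh_kdx_k$, the integral is defined componentwise: $\oint_\Gamma f(u)\,du=\sum_{k=0}^{n-1}h_k\oint_\Gamma\sum_{l=0}^{n-1}P_l\,dx_{(k-l)\bmod n}$. *)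

theory Defs
  imports "HOL-Analysis.Analysis"
begin

text \<open>Polar n-complex numbers are represented as vectors in real ^ 'n, where n = CARD('n).
  The components x_0, ..., x_{n-1} are indexed through a fixed enumeration pidx of the
  finite index type by {0..<n}.\<close>

definition pidx :: "nat \<Rightarrow> 'n::finite" where
  "pidx = (SOME f. bij_betw f {..<CARD('n)} (UNIV :: 'n set))"

definition pcomp :: "real ^ 'n::finite \<Rightarrow> nat \<Rightarrow> real" where
  "pcomp u j = u $ pidx j"

definition hunit :: "nat \<Rightarrow> real ^ 'n::finite" where
  "hunit j = axis (pidx j) 1"

definition pmul :: "real ^ 'n::finite \<Rightarrow> real ^ 'n \<Rightarrow> real ^ 'n" where
  "pmul u v = (\<Sum>j<CARD('n). \<Sum>k<CARD('n).
       (pcomp u j * pcomp v k) *\<^sub>R hunit ((j + k) mod CARD('n)))"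

primrec ppow :: "real ^ 'n::finite \<Rightarrow> nat \<Rightarrow> real ^ 'n" where
  "ppow u 0 = hunit 0"
| "ppow u (Suc l) = pmul u (ppow u l)"

definition pseries :: "(nat \<Rightarrow> real ^ 'n::finite) \<Rightarrow> real ^ 'n \<Rightarrow> real ^ 'n \<Rightarrow> real ^ 'n" where
  "pseries a u0 u = (\<Sum>l. pmul (a l) (ppow (u - u0) l))"

definition pseries_abs_conv :: "(nat \<Rightarrow> real ^ 'n::finite) \<Rightarrow> real ^ 'n \<Rightarrow> real ^ 'n \<Rightarrow> bool" where
  "pseries_abs_conv a u0 u \<longleftrightarrow> summable (\<lambda>l. norm (pmul (a l) (ppow (u - u0) l)))"

text \<open>The componentwise integral: the k-th component of the integral of f(u) du along g
  over [0,1] is the line integral of sum_l P_l dx_{(k-l) mod n}.\<close>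
definition has_pintegral ::
  "(real ^ 'n::finite \<Rightarrow> real ^ 'n) \<Rightarrow> (real \<Rightarrow> real ^ 'n) \<Rightarrow> real ^ 'n \<Rightarrow> bool" where
  "has_pintegral f g I \<longleftrightarrow>
     (\<forall>k<CARD('n).
        ((\<lambda>t. \<Sum>l<CARD('n). pcomp (f (g t)) l *
              pcomp (vector_derivative g (at t within {0..1}))
                    ((k + CARD('n) - l) mod CARD('n)))
          has_integral pcomp I k) {0..1})"

definition spanning_surface_in :: "(real ^ 'n::finite) set \<Rightarrow> (real \<Rightarrow> real ^ 'n) \<Rightarrow> bool" where
  "spanning_surface_in U g \<longleftrightarrow>
     (\<exists>s :: complex \<Rightarrow> real ^ 'n. continuous_on (cball 0 1) s \<and> s ` cball 0 1 \<subseteq> U \<and>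
        (\<forall>t\<in>{0..1}. s (cis (2 * pi * t)) = g t))"

end

theory Submission
  imports Defs
begin

lemma pidx_bij: "bij_betw (pidx :: nat \<Rightarrow> 'n::finite) {..<CARD('n)} UNIV"
proof -
  have "\<exists>f. bij_betw f {..<CARD('n)} (UNIV :: 'n set)"
    using ex_bij_betw_nat_finite[of "UNIV :: 'n set"] by (auto simp: atLeast0LessThan)
  then show ?thesis unfolding pidx_def by (rule someI_ex)
qed

lemma pidx_inj: "j < CARD('n) \<Longrightarrow> k < CARD('n) \<Longrightarrow> (pidx j :: 'n::finite) = pidx k \<longleftrightarrow> j = k"
  using pidx_bij[where 'n='n] unfolding bij_betw_def inj_on_def by auto

lemma pidx_surj: "\<exists>k<CARD('n). pidx k = (i :: 'n::finite)"
  using pidx_bij[where 'n='n] unfolding bij_betw_def by (metis UNIV_I imageE lessThan_iff)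

lemma sum_pidx: "(\<Sum>i\<in>UNIV. f i) = (\<Sum>k<CARD('n). f (pidx k :: 'n::finite))"
  using sum.reindex_bij_betw[OF pidx_bij[where 'n='n], of f] by simp

lemma vec_eq_pcomp:
  fixes x y :: "real ^ 'n::finite"
  assumes "\<And>k. k < CARD('n) \<Longrightarrow> pcomp x k = pcomp y k"
  shows "x = y"
proof (rule vec_eq_iff[THEN iffD2], intro allI)
  fix i :: 'n obtain k where "k < CARD('n)" "pidx k = i" using pidx_surj by blast
  then show "x $ i = y $ i" using assms[of k] by (simp add: pcomp_def)
qed

lemma pcomp_hunit: "j < CARD('n) \<Longrightarrow> m < CARD('n) \<Longrightarrow>
   pcomp (hunit j :: real ^ 'n::finite) m = (if j = m then 1 else 0)"
  by (auto simp: pcomp_def hunit_def axis_def pidx_inj)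

lemma pcomp_add[simp]: "pcomp (x + y) k = pcomp x k + pcomp y k"
  and pcomp_diff[simp]: "pcomp (x - y) k = pcomp x k - pcomp y k"
  and pcomp_scale[simp]: "pcomp (c *\<^sub>R x) k = c * pcomp x k"
  and pcomp_zero[simp]: "pcomp 0 k = 0"
  and pcomp_sum: "pcomp (sum f A) k = (\<Sum>i\<in>A. pcomp (f i) k)"
  by (auto simp: pcomp_def sum_component)

definition omg :: "nat \<Rightarrow> complex" where "omg N = cis (2 * pi / real N)"

definition chi :: "nat \<Rightarrow> real ^ 'n::finite \<Rightarrow> complex" where
  "chi j x = (\<Sum>k<CARD('n). complex_of_real (pcomp x k) * omg CARD('n) ^ (j * k))"

lemma omg_pow_N: "N > 0 \<Longrightarrow> omg N ^ N = 1"
  unfolding omg_def Complex.DeMoivre by simp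

lemma omg_pow_mod: "N > 0 \<Longrightarrow> omg N ^ (p mod N) = omg N ^ p"
proof -
  assume N: "N > 0"
  have "omg N ^ p = omg N ^ (N * (p div N)) * omg N ^ (p mod N)"
    by (metis div_mult_mod_eq power_add mult.commute)
  also have "\<dots> = omg N ^ (p mod N)" using omg_pow_N[OF N] by (simp add: power_mult)
  finally show ?thesis by simp
qed

lemma chi_add[simp]: "chi j (x + y) = chi j x + chi j y"
  by (simp add: chi_def sum.distrib algebra_simps)
lemma chi_diff[simp]: "chi j (x - y) = chi j x - chi j y"
  by (simp add: chi_def sum_subtractf algebra_simps)
lemma chi_scale[simp]: "chi j (c *\<^sub>R x) = complex_of_real c * chi j x"
  by (simp add: chi_def sum_distrib_left algebra_simps)
lemma chi_zero[simp]: "chi j 0 = 0"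
  by (simp add: chi_def)
lemma chi_sum: "chi j (sum f A) = (\<Sum>i\<in>A. chi j (f i))"
  by (induction A rule: infinite_finite_induct) auto

lemma chi_hunit: "p < CARD('n) \<Longrightarrow> chi j (hunit p :: real ^ 'n::finite) = omg CARD('n) ^ (j * p)"
proof -
  assume p: "p < CARD('n)"
  have "chi j (hunit p :: real ^ 'n::finite) = (\<Sum>k<CARD('n). if p = k then omg CARD('n) ^ (j * k) else 0)"
    unfolding chi_def using p by (intro sum.cong) (auto simp: pcomp_hunit)
  also have "\<dots> = omg CARD('n) ^ (j * p)" using p by (simp add: sum.delta)
  finally show ?thesis .
qed

lemma chi_pmul: "chi j (pmul x y :: real ^ 'n::finite) = chi j x * chi j y"
proof -
  have N: "CARD('n) > 0" by simp
  have "chi j (pmul x y) = (\<Sum>a<CARD('n). \<Sum>b<CARD('n). complex_of_real (pcomp x a * pcomp y b) *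
          omg CARD('n) ^ (j * ((a + b) mod CARD('n))))"
    by (simp add: pmul_def chi_sum chi_hunit)
  also have "\<dots> = (\<Sum>a<CARD('n). \<Sum>b<CARD('n). (complex_of_real (pcomp x a) * omg CARD('n) ^ (j * a)) *
          (complex_of_real (pcomp y b) * omg CARD('n) ^ (j * b)))"
  proof (intro sum.cong refl)
    fix a b
    have "omg CARD('n) ^ (j * ((a + b) mod CARD('n))) = omg CARD('n) ^ ((j * ((a + b) mod CARD('n))) mod CARD('n))"
      using omg_pow_mod[OF N] by simp
    also have "\<dots> = omg CARD('n) ^ (j * (a + b))"
      by (simp add: mod_mult_right_eq omg_pow_mod[OF N])
    finally show "complex_of_real (pcomp x a * pcomp y b) * omg CARD('n) ^ (j * ((a + b) mod CARD('n))) =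
      (complex_of_real (pcomp x a) * omg CARD('n) ^ (j * a)) * (complex_of_real (pcomp y b) * omg CARD('n) ^ (j * b))"
      by (simp add: algebra_simps power_add)
  qed
  also have "\<dots> = chi j x * chi j y"
    by (simp add: chi_def sum_product)
  finally show ?thesis .
qed

lemma norm_omg[simp]: "cmod (omg N) = 1"
  by (simp add: omg_def)

lemma omg_nz[simp]: "omg N \<noteq> 0"
  by (simp add: omg_def)

lemma omg_pow_ne1: "0 < d \<Longrightarrow> d < N \<Longrightarrow> omg N ^ d \<noteq> 1"
proof
  assume d: "0 < d" "d < N" and e: "omg N ^ d = 1"
  have "omg N ^ d = exp (\<i> * complex_of_real (real d * (2 * pi / real N)))"
    unfolding omg_def Complex.DeMoivre by (simp add: cis_conv_exp)
  with e have "exp (\<i> * complex_of_real (real d * (2 * pi / real N))) = 1" by simp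
  then have "Re (\<i> * complex_of_real (real d * (2 * pi / real N))) = 0 \<and>
     (\<exists>m::int. Im (\<i> * complex_of_real (real d * (2 * pi / real N))) = of_int (2 * m) * pi)"
    by (simp only: exp_eq_1)
  then obtain m :: int where m: "real d * (2 * pi / real N) = of_int (2 * m) * pi"
    by (metis Im_i_times Re_complex_of_real)
  have "real d = real N * of_int m" using m d by (simp add: field_simps)
  then have "real d / real N = of_int m" using d by (simp add: field_simps)
  moreover have "0 < real d / real N" "real d / real N < 1" using d by auto
  ultimately have "(0::real) < of_int m" "of_int m < (1::real)" by auto
  then have "0 < m" "m < 1" by (simp_all only: of_int_0_less_iff of_int_less_1_iff)
  then show False by simp
qed

lemma cnj_omg: "cnj (omg N) = inverse (omg N)"
  by (simp add: omg_def cis_cnj)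

lemma roots_sum:
  assumes "a < N" "k < N"
  shows "(\<Sum>j<N. (omg N ^ a * cnj (omg N) ^ k) ^ j) = (if a = k then of_nat N else 0)"
proof (cases "a = k")
  case True
  then show ?thesis by (simp add: cnj_omg power_inverse)
next
  case False
  define r where "r = omg N ^ a * cnj (omg N) ^ k"
  have N: "N > 0" using assms by auto
  have rN: "r ^ N = 1" unfolding r_def cnj_omg
    by (simp add: power_mult_distrib power_inverse flip: power_mult) (simp add: mult.commute power_mult omg_pow_N[OF N])
  have "r \<noteq> 1"
  proof
    assume r1: "r = 1"
    show False
    proof (cases "a < k")
      case True
      have "omg N ^ k = omg N ^ a * omg N ^ (k - a)" using True by (simp flip: power_add)
      then have "r = inverse (omg N ^ (k - a))" unfolding r_def cnj_omg by (simp add: power_inverse field_simps)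
      with r1 have "omg N ^ (k - a) = 1" by (metis inverse_1 inverse_inverse_eq)
      then show False using omg_pow_ne1[of "k - a" N] True assms by auto
    next
      case False
      then have ka: "k < a" using \<open>a \<noteq> k\<close> by auto
      have "omg N ^ a = omg N ^ k * omg N ^ (a - k)" using ka by (simp flip: power_add)
      then have "r = omg N ^ (a - k)" unfolding r_def cnj_omg by (simp add: power_inverse field_simps)
      with r1 show False using omg_pow_ne1[of "a - k" N] ka assms by auto
    qed
  qed
  then show ?thesis using False rN by (simp add: sum_gp_strict r_def[symmetric])
qed

lemma chi_inversion:
  assumes k: "k < CARD('n)"
  shows "complex_of_real (pcomp (x :: real ^ 'n::finite) k) =
     (\<Sum>j<CARD('n). chi j x * cnj (omg CARD('n)) ^ (j * k)) / of_nat CARD('n)"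
proof -
  have "(\<Sum>j<CARD('n). chi j x * cnj (omg CARD('n)) ^ (j * k)) =
    (\<Sum>a<CARD('n). complex_of_real (pcomp x a) * (\<Sum>j<CARD('n). (omg CARD('n) ^ a * cnj (omg CARD('n)) ^ k) ^ j))"
    unfolding chi_def sum_distrib_right sum_distrib_left
    by (subst sum.swap) (simp add: power_mult_distrib power_mult mult.commute mult.left_commute flip: power_mult)
  also have "\<dots> = (\<Sum>a<CARD('n). if a = k then complex_of_real (pcomp x a) * of_nat CARD('n) else 0)"
    using k by (intro sum.cong refl) (simp add: roots_sum)
  also have "\<dots> = complex_of_real (pcomp x k) * of_nat CARD('n)" using k by (simp add: sum.delta)
  finally show ?thesis by simp
qed

lemma pcomp_le_chi: "k < CARD('n) \<Longrightarrow>
   \<bar>pcomp (x :: real ^ 'n::finite) k\<bar> \<le> (\<Sum>j<CARD('n). cmod (chi j x)) / of_nat CARD('n)"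
proof -
  assume k: "k < CARD('n)"
  have "\<bar>pcomp x k\<bar> = cmod (complex_of_real (pcomp x k))" by simp
  also have "\<dots> = cmod (\<Sum>j<CARD('n). chi j x * cnj (omg CARD('n)) ^ (j * k)) / of_nat CARD('n)"
    by (simp add: chi_inversion[OF k] norm_divide)
  also have "\<dots> \<le> (\<Sum>j<CARD('n). cmod (chi j x)) / of_nat CARD('n)"
    by (intro divide_right_mono order.trans[OF norm_sum]) (simp_all add: norm_mult norm_power)
  finally show ?thesis .
qed

lemma norm_le_chi: "norm (x :: real ^ 'n::finite) \<le> (\<Sum>j<CARD('n). cmod (chi j x))"
proof -
  have "norm x \<le> (\<Sum>i\<in>UNIV. \<bar>x $ i\<bar>)" by (rule norm_le_l1_cart)
  also have "\<dots> = (\<Sum>k<CARD('n). \<bar>pcomp x k\<bar>)" by (simp add: sum_pidx pcomp_def)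
  also have "\<dots> \<le> (\<Sum>k<CARD('n). (\<Sum>j<CARD('n). cmod (chi j x)) / of_nat CARD('n))"
    by (intro sum_mono pcomp_le_chi) simp
  also have "\<dots> = (\<Sum>j<CARD('n). cmod (chi j x))" by simp
  finally show ?thesis .
qed

lemma chi_le: "cmod (chi j (x :: real ^ 'n::finite)) \<le> of_nat CARD('n) * norm x"
proof -
  have "cmod (chi j x) \<le> (\<Sum>k<CARD('n). cmod (complex_of_real (pcomp x k) * omg CARD('n) ^ (j * k)))"
    unfolding chi_def by (rule norm_sum)
  also have "\<dots> \<le> (\<Sum>k<CARD('n). norm x)"
    by (intro sum_mono) (simp add: norm_mult norm_power pcomp_def component_le_norm_cart)
  finally show ?thesis by simp
qed

lemma chi_eqI:
  fixes x y :: "real ^ 'n::finite"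
  assumes "\<And>j. j < CARD('n) \<Longrightarrow> chi j x = chi j y"
  shows "x = y"
proof -
  have "norm (x - y) \<le> 0" using norm_le_chi[of "x - y"] assms by simp
  then show ?thesis by simp
qed

lemma chi_one[simp]: "chi j (hunit 0 :: real ^ 'n::finite) = 1"
  by (simp add: chi_hunit)

lemma chi_ppow[simp]: "chi j (ppow (y :: real ^ 'n::finite) l) = chi j y ^ l"
  by (induction l) (simp_all add: chi_pmul)

lemmas chi_pmul_simp[simp] = chi_pmul

lemma pmul_comm: "pmul x (y :: real ^ 'n::finite) = pmul y x"
  by (rule chi_eqI) (simp add: mult.commute)

lemma pmul_assoc: "pmul (pmul x y) (z :: real ^ 'n::finite) = pmul x (pmul y z)"
  by (rule chi_eqI) (simp add: mult.assoc)

lemma pmul_one[simp]: "pmul (hunit 0) (x :: real ^ 'n::finite) = x" "pmul x (hunit 0) = x"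
  by (rule chi_eqI, simp)+

lemma bilinear_pmul: "bilinear (pmul :: real ^ 'n::finite \<Rightarrow> _)"
proof -
  have a: "pmul (x + z) y = pmul x y + pmul z y" "pmul y (x + z) = pmul y x + pmul y z"
    "pmul (c *\<^sub>R x) y = c *\<^sub>R pmul x y" "pmul y (c *\<^sub>R x) = c *\<^sub>R pmul y x"
    for x y z :: "real ^ 'n" and c
    by (rule chi_eqI, simp add: algebra_simps)+
  show ?thesis unfolding bilinear_def by (simp add: linearI a)
qed

lemma bounded_bilinear_pmul: "bounded_bilinear (pmul :: real ^ 'n::finite \<Rightarrow> _)"
  using bilinear_pmul bilinear_conv_bounded_bilinear by blast

lemma pmul_scale_right: "pmul x (c *\<^sub>R (y :: real ^ 'n::finite)) = c *\<^sub>R pmul x y"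
  by (rule chi_eqI) simp

lemma pmul_diff_left: "pmul (x - y) (z :: real ^ 'n::finite) = pmul x z - pmul y z"
  by (rule chi_eqI) (simp add: algebra_simps)

lemma pmul_sum_left: "pmul (sum f A) (z :: real ^ 'n::finite) = (\<Sum>i\<in>A. pmul (f i) z)"
  by (rule chi_eqI) (simp add: chi_sum sum_distrib_right)

lemma ppow_deriv:
  fixes u0 :: "real ^ 'n::finite"
  shows "((\<lambda>x. ppow (x - u0) l) has_derivative
     (\<lambda>h. of_nat l *\<^sub>R pmul (ppow (x - u0) (l - 1)) h)) (at x)"
proof (induction l)
  case 0
  then show ?case by simp
next
  case (Suc l)
  have d1: "((\<lambda>x. x - u0) has_derivative (\<lambda>h. h)) (at x)"
    by (auto intro!: derivative_eq_intros)
  have "((\<lambda>x. pmul (x - u0) (ppow (x - u0) l)) has_derivative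
    (\<lambda>h. pmul (x - u0) (of_nat l *\<^sub>R pmul (ppow (x - u0) (l - 1)) h) + pmul h (ppow (x - u0) l))) (at x)"
    by (rule bounded_bilinear.FDERIV[OF bounded_bilinear_pmul d1 Suc])
  moreover have "(\<lambda>h. pmul (x - u0) (of_nat l *\<^sub>R pmul (ppow (x - u0) (l - 1)) h) + pmul h (ppow (x - u0) l))
     = (\<lambda>h. of_nat (Suc l) *\<^sub>R pmul (ppow (x - u0) (Suc l - 1)) h)"
  proof (rule ext, rule chi_eqI)
    fix h j
    show "chi j (pmul (x - u0) (of_nat l *\<^sub>R pmul (ppow (x - u0) (l - 1)) h) + pmul h (ppow (x - u0) l)) =
         chi j (of_nat (Suc l) *\<^sub>R pmul (ppow (x - u0) (Suc l - 1)) h)"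
    proof (cases l)
      case 0 then show ?thesis by simp
    next
      case (Suc m)
      then show ?thesis by (simp add: algebra_simps)
    qed
  qed
  ultimately show ?case by simp
qed

lemma pcomp_pmul_conv:
  assumes m: "m < CARD('n)"
  shows "pcomp (pmul x y :: real ^ 'n::finite) m =
    (\<Sum>l<CARD('n). pcomp x l * pcomp y ((m + CARD('n) - l) mod CARD('n)))"
proof -
  let ?N = "CARD('n)"
  have key: "((a + b) mod ?N = m) \<longleftrightarrow> (b = (m + ?N - a) mod ?N)" if "a < ?N" "b < ?N" for a b
  proof -
    have md: "x mod ?N = (if x < ?N then x else x - ?N)" if "x < 2 * ?N" for x
    proof (cases "x < ?N")
      case False
      then have "x mod ?N = (x - ?N) mod ?N" by (simp add: le_mod_geq)
      also have "\<dots> = x - ?N" using that False by (intro mod_less) linarith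
      finally show ?thesis using False by simp
    qed simp
    have "(a + b) mod ?N = (if a + b < ?N then a + b else a + b - ?N)" using that by (intro md) linarith
    moreover have "(m + ?N - a) mod ?N = (if m + ?N - a < ?N then m + ?N - a else m + ?N - a - ?N)"
      using that m by (intro md) linarith
    ultimately show ?thesis using that m by auto
  qed
  have "pcomp (pmul x y) m = (\<Sum>a<?N. \<Sum>b<?N. pcomp x a * pcomp y b * (if (a + b) mod ?N = m then 1 else 0))"
    unfolding pmul_def pcomp_sum using m by (simp add: pcomp_hunit)
  also have "\<dots> = (\<Sum>a<?N. \<Sum>b<?N. if b = (m + ?N - a) mod ?N then pcomp x a * pcomp y b else 0)"
    by (intro sum.cong refl) (simp add: key)
  also have "\<dots> = (\<Sum>l<?N. pcomp x l * pcomp y ((m + ?N - l) mod ?N))"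
    by (intro sum.cong refl) (simp add: sum.delta)
  finally show ?thesis .
qed

lemma bound_at:
  fixes a :: "nat \<Rightarrow> real ^ 'n::finite"
  assumes "summable (\<lambda>l. norm (pmul (a l) (ppow (w - u0) l)))"
  shows "\<exists>M. \<forall>l. cmod (chi j (a l)) * cmod (chi j (w - u0)) ^ l \<le> M"
proof (intro exI allI)
  fix l
  let ?S = "suminf (\<lambda>l. norm (pmul (a l) (ppow (w - u0) l)))"
  have "cmod (chi j (a l)) * cmod (chi j (w - u0)) ^ l = cmod (chi j (pmul (a l) (ppow (w - u0) l)))"
    by (simp add: norm_mult norm_power)
  also have "\<dots> \<le> of_nat CARD('n) * norm (pmul (a l) (ppow (w - u0) l))" by (rule chi_le)
  also have "\<dots> \<le> of_nat CARD('n) * ?S"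
    using sum_le_suminf[OF assms, of "{l}"] by (intro mult_left_mono) auto
  finally show "cmod (chi j (a l)) * cmod (chi j (w - u0)) ^ l \<le> of_nat CARD('n) * ?S" .
qed

lemma choose_w:
  fixes u u0 :: "real ^ 'n::finite"
  assumes "open U" "u \<in> U"
  shows "\<exists>w\<in>U. cmod (chi j (u - u0)) < cmod (chi j (w - u0))"
proof -
  obtain d where d: "d > 0" "ball u d \<subseteq> U" using assms open_contains_ball by blast
  show ?thesis
  proof (cases "chi j (u - u0) = 0")
    case True
    define w where "w = u + (d / 2) *\<^sub>R hunit 0"
    have "dist u w < d" using d by (simp add: w_def dist_norm hunit_def)
    then have "w \<in> U" using d by auto
    moreover have "chi j (w - u0) = complex_of_real (d / 2)"
      using True by (simp add: w_def algebra_simps)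
    ultimately show ?thesis using True d by (intro bexI[of _ w]) auto
  next
    case False
    define K where "K = norm (u - u0) + 1"
    have p: "K > 0" unfolding K_def by (simp add: add_nonneg_pos)
    define e where "e = d / (2 * K)"
    have e: "e > 0" using d p unfolding e_def by simp
    define w where "w = u + e *\<^sub>R (u - u0)"
    have "e * norm (u - u0) < d"
    proof -
      have "e * norm (u - u0) \<le> e * K" using e by (simp add: K_def)
      also have "e * K = d / 2" unfolding e_def using p by (simp add: field_simps)
      finally show ?thesis using d by simp
    qed
    then have "dist u w < d" using e by (simp add: w_def dist_norm)
    then have "w \<in> U" using d by auto
    moreover have "cmod (chi j (w - u0)) = (1 + e) * cmod (chi j (u - u0))"
    proof -
      have "chi j (w - u0) = complex_of_real (1 + e) * chi j (u - u0)"
        by (simp add: w_def algebra_simps)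
      then show ?thesis using e by (simp only: norm_mult norm_of_real)
    qed
    moreover have "cmod (chi j (u - u0)) < (1 + e) * cmod (chi j (u - u0))"
      using False e by simp
    ultimately show ?thesis by (intro bexI[of _ w]) auto
  qed
qed

lemma local_dom:
  fixes a :: "nat \<Rightarrow> real ^ 'n::finite"
  assumes "open U" "\<And>v. v \<in> U \<Longrightarrow> summable (\<lambda>l. norm (pmul (a l) (ppow (v - u0) l)))" "u \<in> U"
  shows "\<exists>\<epsilon>>0. \<exists>b. summable b \<and> (\<forall>v\<in>ball u \<epsilon>. \<forall>l. norm (pmul (a l) (ppow (v - u0) l)) \<le> b l)"
proof -
  let ?N = "CARD('n)"
  let ?c = "\<lambda>j. cmod (chi j (u - u0))"
  have "\<forall>j. \<exists>r M. ?c j < r \<and> (\<forall>l. cmod (chi j (a l)) * r ^ l \<le> M)"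
  proof
    fix j
    obtain w where w: "w \<in> U" "?c j < cmod (chi j (w - u0))" using choose_w[OF assms(1,3)] by blast
    obtain M where "\<forall>l. cmod (chi j (a l)) * cmod (chi j (w - u0)) ^ l \<le> M"
      using bound_at[OF assms(2)[OF w(1)]] by blast
    then show "\<exists>r M. ?c j < r \<and> (\<forall>l. cmod (chi j (a l)) * r ^ l \<le> M)" using w by blast
  qed
  then obtain r M where rM: "\<And>j. ?c j < r j" "\<And>j l. cmod (chi j (a l)) * r j ^ l \<le> M j" by metis
  have rpos: "r j > 0" for j using rM(1)[of j] norm_ge_zero[of "chi j (u - u0)"] by linarith
  define s where "s j = (?c j + r j) / 2" for j
  define q where "q j = s j / r j" for j
  have q: "0 \<le> q j" "q j < 1" for j using rpos[of j] rM(1)[of j] by (auto simp: q_def s_def field_simps)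
  define \<epsilon> where "\<epsilon> = Min ((\<lambda>j. (r j - ?c j) / (2 * of_nat ?N)) ` {..<?N})"
  have \<epsilon>: "\<epsilon> > 0" unfolding \<epsilon>_def using rM(1) by (subst Min_gr_iff) (auto simp: lessThan_empty_iff)
  have \<epsilon>le: "\<epsilon> \<le> (r j - ?c j) / (2 * of_nat ?N)" if "j < ?N" for j
    unfolding \<epsilon>_def using that by (intro Min_le) auto
  define b where "b l = (\<Sum>j<?N. M j * q j ^ l)" for l
  have "summable b" unfolding b_def
    by (intro summable_sum summable_mult summable_geometric) (use q in auto)
  moreover have "norm (pmul (a l) (ppow (v - u0) l)) \<le> b l" if v: "v \<in> ball u \<epsilon>" for v l
  proof -
    have cv: "cmod (chi j (v - u0)) \<le> s j" if j: "j < ?N" for j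
    proof -
      have "chi j (v - u0) = chi j (u - u0) + chi j (v - u)" by (simp add: algebra_simps)
      then have "cmod (chi j (v - u0)) \<le> ?c j + cmod (chi j (v - u))" by (metis norm_triangle_ineq)
      also have "cmod (chi j (v - u)) \<le> of_nat ?N * norm (v - u)" by (rule chi_le)
      also have "\<dots> \<le> of_nat ?N * \<epsilon>" using v by (intro mult_left_mono) (auto simp: dist_norm norm_minus_commute)
      also have "\<dots> \<le> of_nat ?N * ((r j - ?c j) / (2 * of_nat ?N))" using \<epsilon>le[OF j] by (intro mult_left_mono) auto
      also have "\<dots> = (r j - ?c j) / 2" by simp
      finally show ?thesis by (simp add: s_def field_simps)
    qed
    have "norm (pmul (a l) (ppow (v - u0) l)) \<le> (\<Sum>j<?N. cmod (chi j (pmul (a l) (ppow (v - u0) l))))"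
      by (rule norm_le_chi)
    also have "\<dots> \<le> b l" unfolding b_def
    proof (rule sum_mono)
      fix j assume "j \<in> {..<?N}"
      then have j: "j < ?N" by simp
      have "cmod (chi j (pmul (a l) (ppow (v - u0) l))) = cmod (chi j (a l)) * cmod (chi j (v - u0)) ^ l"
        by (simp add: norm_mult norm_power)
      also have "\<dots> \<le> cmod (chi j (a l)) * s j ^ l"
        by (intro mult_left_mono power_mono cv[OF j]) auto
      also have "\<dots> = (cmod (chi j (a l)) * r j ^ l) * q j ^ l"
        using rpos[of j] by (simp add: q_def power_divide)
      also have "\<dots> \<le> M j * q j ^ l" using q[of j] rM(2) by (intro mult_right_mono) auto
      finally show "cmod (chi j (pmul (a l) (ppow (v - u0) l))) \<le> M j * q j ^ l" .
    qed
    finally show ?thesis .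
  qed
  ultimately show ?thesis using \<epsilon> by blast
qed

definition Fterm :: "(nat \<Rightarrow> real ^ 'n::finite) \<Rightarrow> real ^ 'n \<Rightarrow> nat \<Rightarrow> real ^ 'n \<Rightarrow> real ^ 'n" where
  "Fterm a u0 l x = (1 / real (Suc l)) *\<^sub>R pmul (a l) (ppow (x - u0) (Suc l))"

definition Fprim :: "(nat \<Rightarrow> real ^ 'n::finite) \<Rightarrow> real ^ 'n \<Rightarrow> real ^ 'n \<Rightarrow> real ^ 'n" where
  "Fprim a u0 x = (\<Sum>l. Fterm a u0 l x)"

lemma Fterm_deriv:
  "(Fterm a u0 l has_derivative (\<lambda>h. pmul (pmul (a l) (ppow (x - u0) l)) h)) (at x)"
proof -
  have "((\<lambda>x. pmul (a l) (ppow (x - u0) (Suc l))) has_derivative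
     (\<lambda>h. pmul (a l) (of_nat (Suc l) *\<^sub>R pmul (ppow (x - u0) (Suc l - 1)) h) + pmul 0 (ppow (x - u0) (Suc l)))) (at x)"
    by (rule bounded_bilinear.FDERIV[OF bounded_bilinear_pmul has_derivative_const ppow_deriv])
  then have "((\<lambda>x. (1 / real (Suc l)) *\<^sub>R pmul (a l) (ppow (x - u0) (Suc l))) has_derivative
     (\<lambda>h. (1 / real (Suc l)) *\<^sub>R (pmul (a l) (of_nat (Suc l) *\<^sub>R pmul (ppow (x - u0) (Suc l - 1)) h) + pmul 0 (ppow (x - u0) (Suc l))))) (at x)"
    by (rule has_derivative_scaleR_right)
  moreover have "(\<lambda>h. (1 / real (Suc l)) *\<^sub>R (pmul (a l) (of_nat (Suc l) *\<^sub>R pmul (ppow (x - u0) (Suc l - 1)) h) + pmul 0 (ppow (x - u0) (Suc l))))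
     = (\<lambda>h. pmul (pmul (a l) (ppow (x - u0) l)) h)"
  proof (intro ext chi_eqI)
    fix h j
    have nz: "1 + complex_of_nat l \<noteq> 0" by (metis add.commute of_nat_Suc of_nat_neq_0)
    show "chi j ((1 / real (Suc l)) *\<^sub>R (pmul (a l) (of_nat (Suc l) *\<^sub>R pmul (ppow (x - u0) (Suc l - 1)) h) + pmul 0 (ppow (x - u0) (Suc l)))) =
          chi j (pmul (pmul (a l) (ppow (x - u0) l)) h)"
      using nz by (simp add: field_simps)
  qed
  ultimately show ?thesis unfolding Fterm_def by simp
qed

lemma F_deriv:
  fixes a :: "nat \<Rightarrow> real ^ 'n::finite"
  assumes U: "open U" "\<And>v. v \<in> U \<Longrightarrow> summable (\<lambda>l. norm (pmul (a l) (ppow (v - u0) l)))" and u: "u \<in> U"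
  shows "(Fprim a u0 has_derivative (\<lambda>h. pmul (pseries a u0 u) h)) (at u)"
proof -
  obtain \<epsilon> b where \<epsilon>: "\<epsilon> > 0" and b: "summable b"
    and bd: "\<And>v l. v \<in> ball u \<epsilon> \<Longrightarrow> norm (pmul (a l) (ppow (v - u0) l)) \<le> b l"
    using local_dom[OF U u] by blast
  obtain K where K: "K > 0" "\<And>x y :: real ^ 'n. norm (pmul x y) \<le> norm x * norm y * K"
    using bounded_bilinear.pos_bounded[OF bounded_bilinear_pmul] by blast
  let ?T = "\<lambda>x l. pmul (a l) (ppow (x - u0) l)"
  have b0: "0 \<le> b l" for l using bd[of u l] \<epsilon> by (meson centre_in_ball norm_ge_zero order_trans)
  have sn: "summable (\<lambda>l. norm (?T x l))" if "x \<in> ball u \<epsilon>" for x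
    by (rule summable_comparison_test'[OF b]) (use bd[OF that] in simp)
  have tail: "norm (pseries a u0 x - (\<Sum>i<N. ?T x i)) \<le> (\<Sum>i. b (i + N))" if x: "x \<in> ball u \<epsilon>" for x N
  proof -
    have s: "summable (?T x)" using summable_norm_cancel[OF sn[OF x]] .
    have sN: "summable (\<lambda>i. norm (?T x (i + N)))" using sn[OF x] by (subst summable_iff_shift)
    have "pseries a u0 x - (\<Sum>i<N. ?T x i) = (\<Sum>i. ?T x (i + N))"
      unfolding pseries_def using suminf_split_initial_segment[OF s, of N] by simp
    also have "norm \<dots> \<le> (\<Sum>i. norm (?T x (i + N)))" by (rule summable_norm[OF sN])
    also have "\<dots> \<le> (\<Sum>i. b (i + N))"
      by (intro suminf_le sN bd[OF x]) (use b in \<open>simp add: summable_iff_shift\<close>)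
    finally show ?thesis .
  qed
  have unif: "\<forall>\<^sub>F N in sequentially. \<forall>x\<in>ball u \<epsilon>. \<forall>h.
      norm ((\<Sum>i<N. pmul (?T x i) h) - pmul (pseries a u0 x) h) \<le> e * norm h" if e: "e > 0" for e
  proof -
    obtain N0 where N0: "\<And>N. N \<ge> N0 \<Longrightarrow> norm (\<Sum>i. b (i + N)) < e / K"
      using suminf_exist_split[OF _ b, of "e / K"] e K by auto
    show ?thesis unfolding eventually_sequentially
    proof (intro exI allI impI ballI)
      fix N x h assume N: "N \<ge> N0" and x: "x \<in> ball u \<epsilon>"
      have "(\<Sum>i<N. pmul (?T x i) h) - pmul (pseries a u0 x) h = pmul ((\<Sum>i<N. ?T x i) - pseries a u0 x) h"
        by (simp add: pmul_sum_left pmul_diff_left)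
      also have "norm \<dots> \<le> norm ((\<Sum>i<N. ?T x i) - pseries a u0 x) * norm h * K" by (rule K(2))
      also have "\<dots> \<le> (e / K) * norm h * K"
      proof (intro mult_right_mono)
        have "norm ((\<Sum>i<N. ?T x i) - pseries a u0 x) \<le> (\<Sum>i. b (i + N))"
          using tail[OF x, of N] by (simp add: norm_minus_commute)
        also have "\<dots> \<le> norm (\<Sum>i. b (i + N))" by simp
        also have "\<dots> \<le> e / K" using N0[OF N] by simp
        finally show "norm ((\<Sum>i<N. ?T x i) - pseries a u0 x) \<le> e / K" .
      qed (use K in auto)
      also have "\<dots> = e * norm h" using K by simp
      finally show "norm ((\<Sum>i<N. pmul (?T x i) h) - pmul (pseries a u0 x) h) \<le> e * norm h" .
    qed
  qed
  have Fu: "summable (\<lambda>l. Fterm a u0 l u)"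
  proof (rule summable_comparison_test'[of "\<lambda>l. b l * (norm (u - u0) * K)"])
    show "summable (\<lambda>l. b l * (norm (u - u0) * K))" using b by (rule summable_mult2)
    fix l
    have "Fterm a u0 l u = (1 / real (Suc l)) *\<^sub>R pmul (?T u l) (u - u0)"
      unfolding Fterm_def by (intro chi_eqI) simp
    then have "norm (Fterm a u0 l u) \<le> norm (pmul (?T u l) (u - u0))"
      by (simp add: field_simps)
    also have "\<dots> \<le> norm (?T u l) * norm (u - u0) * K" by (rule K(2))
    also have "\<dots> \<le> b l * norm (u - u0) * K" using \<epsilon> K
      by (intro mult_right_mono bd) auto
    finally show "norm (Fterm a u0 l u) \<le> b l * (norm (u - u0) * K)" by (simp add: mult.assoc)
  qed
  have "\<exists>G. \<forall>x\<in>ball u \<epsilon>. (\<lambda>l. Fterm a u0 l x) sums G x \<and>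
      (G has_derivative (\<lambda>h. pmul (pseries a u0 x) h)) (at x within ball u \<epsilon>)"
  proof (rule has_derivative_series[OF convex_ball])
    show "\<And>n x. x \<in> ball u \<epsilon> \<Longrightarrow> (Fterm a u0 n has_derivative (\<lambda>h. pmul (?T x n) h)) (at x within ball u \<epsilon>)"
      by (rule has_derivative_at_withinI[OF Fterm_deriv])
    show "\<And>e. e > 0 \<Longrightarrow> \<forall>\<^sub>F N in sequentially. \<forall>x\<in>ball u \<epsilon>. \<forall>h.
      norm ((\<Sum>i<N. pmul (?T x i) h) - pmul (pseries a u0 x) h) \<le> e * norm h"
      by (rule unif)
    show "u \<in> ball u \<epsilon>" using \<epsilon> by simp
    show "(\<lambda>l. Fterm a u0 l u) sums suminf (\<lambda>l. Fterm a u0 l u)" using Fu by (rule summable_sums)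
  qed
  then obtain G where G: "\<And>x. x \<in> ball u \<epsilon> \<Longrightarrow> (\<lambda>l. Fterm a u0 l x) sums G x \<and>
      (G has_derivative (\<lambda>h. pmul (pseries a u0 x) h)) (at x within ball u \<epsilon>)" by blast
  have dG: "(G has_derivative (\<lambda>h. pmul (pseries a u0 u) h)) (at u within ball u \<epsilon>)"
    using G[of u] \<epsilon> by simp
  have dG2: "(G has_derivative (\<lambda>h. pmul (pseries a u0 u) h)) (at u)"
    using dG \<epsilon> by (simp only: at_within_open[OF centre_in_ball[THEN iffD2] open_ball])
  have eq: "G x = Fprim a u0 x" if "x \<in> ball u \<epsilon>" for x
    using G[OF that] unfolding Fprim_def by (simp add: sums_iff)
  show ?thesis
    using has_derivative_transform_within_open[OF dG2 open_ball, of u \<epsilon> "Fprim a u0"] eq \<epsilon> by simp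
qed

theorem mainTheorem16:
  fixes a :: "nat \<Rightarrow> real ^ 'n::finite"
    and u0 :: "real ^ 'n"
    and U :: "(real ^ 'n) set"
    and g :: "real \<Rightarrow> real ^ 'n"
  assumes "CARD('n) \<ge> 2"
    and "open U"
    and "\<And>u. u \<in> U \<Longrightarrow> pseries_abs_conv a u0 u"
    and "valid_path g"
    and "pathfinish g = pathstart g"
    and "path_image g \<subseteq> U"
    and "spanning_surface_in U g"
  shows "has_pintegral (pseries a u0) g 0"
proof -
  have sU: "\<And>v. v \<in> U \<Longrightarrow> summable (\<lambda>l. norm (pmul (a l) (ppow (v - u0) l)))"
    using assms(3) unfolding pseries_abs_conv_def by blast
  have dF: "(Fprim a u0 has_derivative (\<lambda>h. pmul (pseries a u0 u) h)) (at u)" if "u \<in> U" for u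
    by (rule F_deriv[OF assms(2) sU that])
  have gU: "g t \<in> U" if "t \<in> {0..1}" for t
    using assms(6) that unfolding path_image_def by blast
  obtain S D where S: "finite S" and gc: "continuous_on {0..1} g"
    and gD: "\<And>t. t \<in> {0..1} - S \<Longrightarrow> (g has_vector_derivative D t) (at t)"
    using assms(4) unfolding valid_path_def piecewise_C1_differentiable_on_def C1_differentiable_on_def
    by blast
  define H where "H t = Fprim a u0 (g t)" for t
  define I where "I t = pmul (pseries a u0 (g t)) (vector_derivative g (at t within {0..1}))" for t
  have "(I has_integral (H 1 - H 0)) {0..1}"
  proof (rule fundamental_theorem_of_calculus_interior_strong[OF S])
    show "(0::real) \<le> 1" by simp
    fix t assume t: "t \<in> {0<..<1} - S"
    then have t1: "t \<in> {0..1} - S" by auto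
    have vd: "vector_derivative g (at t within {0..1}) = D t"
      using vector_derivative_at_within_ivl[OF gD[OF t1], of 0 1] t by auto
    have "((Fprim a u0 \<circ> g) has_derivative ((\<lambda>h. pmul (pseries a u0 (g t)) h) \<circ> (\<lambda>s. s *\<^sub>R D t))) (at t)"
      by (rule diff_chain_at[OF gD[OF t1, unfolded has_vector_derivative_def] dF[OF gU]]) (use t1 in auto)
    moreover have "((\<lambda>h. pmul (pseries a u0 (g t)) h) \<circ> (\<lambda>s. s *\<^sub>R D t)) = (\<lambda>s. s *\<^sub>R I t)"
      by (auto simp: I_def vd pmul_scale_right)
    ultimately show "(H has_vector_derivative I t) (at t)"
      unfolding has_vector_derivative_def H_def by (simp add: o_def)
  next
    have "continuous_on (g ` {0..1}) (Fprim a u0)"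
      by (intro continuous_at_imp_continuous_on ballI has_derivative_continuous[OF dF]) (auto intro: gU)
    then show "continuous_on {0..1} H" unfolding H_def
      by (rule continuous_on_compose2[OF _ gc]) auto
  qed
  moreover have "H 1 = H 0" using assms(5) unfolding H_def pathfinish_def pathstart_def by simp
  ultimately have I0: "(I has_integral 0) {0..1}" by simp
  show ?thesis unfolding has_pintegral_def
  proof (intro allI impI)
    fix k assume k: "k < CARD('n)"
    have "((\<lambda>x. x $ pidx k) \<circ> I has_integral (0 :: real ^ 'n) $ pidx k) {0..1}"
      by (rule has_integral_linear[OF I0 bounded_linear_vec_nth])
    then show "((\<lambda>t. \<Sum>l<CARD('n). pcomp (pseries a u0 (g t)) l *
              pcomp (vector_derivative g (at t within {0..1})) ((k + CARD('n) - l) mod CARD('n)))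
          has_integral pcomp 0 k) {0..1}"
      by (simp add: o_def I_def pcomp_pmul_conv[OF k, symmetric] pcomp_def[symmetric])
  qed
qed

end
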